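(* Assume the setting below with $k\ge2$, suppose $\mathcal{S}$ is pseudo-symmetric, and let $(x_0,y_0)\in L$ be the point with $\varphi(x_0,y_0)=g(\mathcal{S})+a$. If $(x_0,y_0)\ne(2,0)$, then either $x_0=0$ or $x_0\equiv1\pmod k$. In particular, $\varphi(x_0,y_0)=\varphi(x_0-x,y_0-y)+\varphi(x,y)$ for all integers $0\le x\le x_0$, $0\le y\le y_0$.
   Context: Setting (AA-semigroups). Let $a,d,k,c$ be positive integers with $\gcd(a,a+d,\ldots,a+kd,c)=1$ and $\gcd(a,d)=1$, and let $\mathcal{S}=\langle a,a+d,\ldots,a+kd,c\rangle$ be the numerical semigroup of non-negative integer combinations of these generators; $g(\mathcal{S})$ is its Frobenius number (largest integer not in $\mathcal{S}$). $\mathcal{S}$ is pseudo-symmetric if $g(\mathcal{S})$ is even and $\mathcal{S}\cup(g(\mathcal{S})-\mathcal{S})=\mathbb{Z}\setminus\{g(\mathcal{S})/2\}$. Put $s_{-1}=a$ and let $s_0$ be the unique integer with $ds_0\equiv c\pmod a$, $0\le s_0<a$. If $s_0=0$ set $m=-1$. Otherwise define $q_{i+1},s_{i+1}$ for $i=0,1,2,\ldots$ by $s_{i-1}=q_{i+1}s_i-s_{i+1}$ with $0\le s_{i+1}<s_i$, and let $m$ be the index with $s_m>0=s_{m+1}$ (so $s_m=\gcd(a,c)$). Define $P_{-1}=0$, $P_0=1$, $P_{i+1}=q_{i+1}P_i-P_{i-1}$ for $i=0,\ldots,m$, and $R_i=\frac1a\big((a+kd)s_i-kcP_i\big)$ for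 $-1\le i\le m+1$; these are integers with $-c/s_m=R_{m+1}<R_m<\cdots<R_0<R_{-1}=a+kd$. Let $v$ be the unique integer with $R_{v+1}\le0<R_v$. Let $L=A\cup B$, where $A=\{(x,y)\in\mathbb{Z}^2:0\le x\le s_v-1,\ 0\le y\le P_{v+1}-P_v-1\}$ and $B=\{(x,y)\in\mathbb{Z}^2:0\le x\le s_v-s_{v+1}-1,\ P_{v+1}-P_v\le y\le P_{v+1}-1\}$. Define $\varphi:\mathbb{Z}^2\to\mathbb{Z}$, $\varphi(x,y)=\lceil x/k\rceil a+xd+yc$. It is known (Rødseth) that $|L|=a$ and $\varphi$ maps $L$ bijectively onto $\mathrm{Ap}(\mathcal{S};a)=\{s\in\mathcal{S}:s-a\notin\mathcal{S}\}$; consequently $g(\mathcal{S})+a=\max\varphi(L)$ is attained at $(s_v-s_{v+1}-1,P_{v+1}-1)$ or at $(s_v-1,P_{v+1}-P_v-1)$. *)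

theory Defs
  imports "HOL-Number_Theory.Number_Theory"
begin

definition AA_semigroup :: "int \<Rightarrow> int \<Rightarrow> nat \<Rightarrow> int \<Rightarrow> int set" where
  "AA_semigroup a d k c =
     {n. \<exists>u::nat \<Rightarrow> nat. \<exists>w::nat.
           n = (\<Sum>i\<le>k. int (u i) * (a + int i * d)) + int w * c}"

definition frobenius :: "int set \<Rightarrow> int" where
  "frobenius S = (GREATEST n. n \<notin> S)"

definition pseudo_symmetric :: "int set \<Rightarrow> bool" where
  "pseudo_symmetric S \<longleftrightarrow>
     even (frobenius S) \<and>
     S \<union> {frobenius S - s | s. s \<in> S} = UNIV - {frobenius S div 2}"

definition phi :: "int \<Rightarrow> int \<Rightarrow> nat \<Rightarrow> int \<Rightarrow> int \<Rightarrow> int \<Rightarrow> int" where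
  "phi a d k c x y = \<lceil>real_of_int x / real k\<rceil> * a + x * d + y * c"

definition Lset :: "int \<Rightarrow> int \<Rightarrow> int \<Rightarrow> int \<Rightarrow> (int \<times> int) set" where
  "Lset sv sv1 Pv Pv1 =
     {(x, y). 0 \<le> x \<and> x \<le> sv - 1 \<and> 0 \<le> y \<and> y \<le> Pv1 - Pv - 1} \<union>
     {(x, y). 0 \<le> x \<and> x \<le> sv - sv1 - 1 \<and> Pv1 - Pv \<le> y \<and> y \<le> Pv1 - 1}"

end

theory Submission
  imports Defs
begin

lemma ceil_window:
  fixes x :: int and k :: nat
  assumes "k > 0"
  shows "x \<le> int k * \<lceil>real_of_int x / real k\<rceil> \<and>
         int k * \<lceil>real_of_int x / real k\<rceil> \<le> x + int k - 1"
proof -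
  define C where "C = \<lceil>real_of_int x / real k\<rceil>"
  have kp: "real k > 0" using assms by simp
  have c1: "real_of_int x / real k \<le> of_int C" "of_int C - 1 < real_of_int x / real k"
    using ceiling_correct[of "real_of_int x / real k"] unfolding C_def by auto
  from c1(1) kp have "real_of_int x \<le> real k * of_int C" by (simp add: divide_le_eq mult.commute)
  hence h1: "x \<le> int k * C" by (metis of_int_le_iff of_int_mult of_int_of_nat_eq)
  from c1(2) kp have "real k * (of_int C - 1) < real_of_int x" by (simp add: less_divide_eq mult.commute)
  hence "real_of_int (int k * C - int k) < real_of_int x" by (simp add: algebra_simps)
  hence "int k * C - int k < x" by linarith
  with h1 show ?thesis unfolding C_def by simp
qed

lemma key:
  fixes a d c k sz sv svB Pv PvB Rv RvB x y U X w C :: int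
  assumes a0: "a > 0" and k0: "k > 0"
    and sv: "0 \<le> svB" "svB < sv" and Pv: "0 \<le> Pv" "Pv < PvB"
    and det: "sv * PvB - svB * Pv = a"
    and l1: "a dvd sv - Pv * sz" and l2: "a dvd svB - PvB * sz"
    and R1: "a * Rv = (a + k * d) * sv - k * c * Pv" and R2: "a * RvB = (a + k * d) * svB - k * c * PvB"
    and Rs: "Rv > 0" "RvB \<le> 0"
    and cs: "a dvd c - d * sz" and cop: "coprime a d"
    and L: "(0 \<le> x \<and> x \<le> sv - 1 \<and> 0 \<le> y \<and> y \<le> PvB - Pv - 1) \<or>
            (0 \<le> x \<and> x \<le> sv - svB - 1 \<and> PvB - Pv \<le> y \<and> y \<le> PvB - 1)"
    and X0: "X \<ge> 0" and w0: "w \<ge> 0" and kU: "k * U \<ge> X" and kC: "k * C \<le> x + k - 1"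
    and dv: "a dvd (U * a + X * d + w * c) - (C * a + x * d + y * c)"
  shows "C * a + x * d + y * c \<le> U * a + X * d + w * c"
proof -
  define p where "p = X - x"
  define q where "q = w - y"
  obtain t where t: "c - d * sz = a * t" using cs by blast
  have "(U * a + X * d + w * c) - (C * a + x * d + y * c) = a * (U - C + q * t) + d * (p + q * sz)"
    unfolding p_def q_def using t by (simp add: algebra_simps)
  hence "a dvd d * (p + q * sz)" using dv by (metis dvd_add_right_iff dvd_triv_left)
  hence dpq: "a dvd p + q * sz" using cop by (simp add: coprime_dvd_mult_right_iff)
  have "a dvd PvB * (p + q * sz) + q * (svB - PvB * sz)" using dpq l2 by simp
  moreover have "PvB * (p + q * sz) + q * (svB - PvB * sz) = p * PvB + q * svB" by (simp add: algebra_simps)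
  ultimately obtain \<alpha> where al: "p * PvB + q * svB = a * \<alpha>" by (metis dvdE)
  have "a dvd -(Pv * (p + q * sz) + q * (sv - Pv * sz))" using dpq l1 by simp
  moreover have "-(Pv * (p + q * sz) + q * (sv - Pv * sz)) = -(p * Pv + q * sv)" by (simp add: algebra_simps)
  ultimately obtain \<beta> where be: "-(p * Pv + q * sv) = a * \<beta>" by (metis dvdE)
  have "a * (\<alpha> * sv + \<beta> * svB) = a * p"
  proof -
    have "a * (\<alpha> * sv + \<beta> * svB) = sv * (a * \<alpha>) + svB * (a * \<beta>)" by (simp add: algebra_simps)
    also have "\<dots> = p * (sv * PvB - svB * Pv)" unfolding al[symmetric] be[symmetric] by (simp add: algebra_simps)
    finally show ?thesis using det by simp
  qed
  hence pe: "p = \<alpha> * sv + \<beta> * svB" using a0 by simp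
  have "a * (\<alpha> * Pv + \<beta> * PvB) = a * (-q)"
  proof -
    have "a * (\<alpha> * Pv + \<beta> * PvB) = Pv * (a * \<alpha>) + PvB * (a * \<beta>)" by (simp add: algebra_simps)
    also have "\<dots> = - q * (sv * PvB - svB * Pv)" unfolding al[symmetric] be[symmetric] by (simp add: algebra_simps)
    finally show ?thesis using det by simp
  qed
  hence qe: "-q = \<alpha> * Pv + \<beta> * PvB" using a0 by (metis less_irrefl mult_cancel_left)
  have Xe: "X = x + \<alpha> * sv + \<beta> * svB" using pe p_def by simp
  have we: "w = y - \<alpha> * Pv - \<beta> * PvB" using qe q_def by simp
  have xb: "x \<le> sv - 1" "y \<le> PvB - 1" "0 \<le> x" "0 \<le> y" using L sv Pv by auto
  have pos: "\<alpha> * Rv + \<beta> * RvB \<ge> 0"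
  proof (cases "\<alpha> \<ge> 0")
    case True
    show ?thesis
    proof (cases "\<beta> \<le> 0")
      case True
      then show ?thesis using \<open>\<alpha> \<ge> 0\<close> Rs by (simp add: mult_nonneg_nonneg mult_nonpos_nonpos)
    next
      case False
      have "\<alpha> * Pv \<ge> 0" using True Pv by simp
      moreover have "\<beta> * PvB \<ge> PvB" using False Pv by simp
      ultimately have "w < 0" using we xb by linarith
      then show ?thesis using w0 by simp
    qed
  next
    case False
    define a' where "a' = - \<alpha>"
    have a'1: "a' \<ge> 1" using False a'_def by simp
    show ?thesis
    proof (cases "\<beta> \<le> 0")
      case True
      have "\<beta> * svB \<le> 0" using True sv by (simp add: mult_nonpos_nonneg)
      moreover have "a' * sv \<ge> sv" using a'1 sv by simp
      ultimately have "X < 0" using Xe xb a'_def by simp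
      then show ?thesis using X0 by simp
    next
      case False
      hence b1: "\<beta> \<ge> 1" by simp
      show ?thesis
      proof (cases "\<beta> \<ge> a'")
        case True
        define g where "g = \<beta> - a'"
        have g0: "g \<ge> 0" using True g_def by simp
        have w2: "w = y - a' * (PvB - Pv) - g * PvB" using we g_def a'_def by (simp add: algebra_simps)
        have X2: "X = x - \<beta> * (sv - svB) + g * sv" using Xe g_def a'_def by (simp add: algebra_simps)
        have "a' * (PvB - Pv) \<ge> PvB - Pv" using a'1 Pv by simp
        moreover have "g * PvB \<ge> 0" using g0 Pv by simp
        ultimately have yb: "y \<ge> PvB - Pv" using w2 w0 by linarith
        hence xB: "x \<le> sv - svB - 1" using L by auto
        show ?thesis
        proof (cases "g = 0")
          case True
          have "\<beta> * (sv - svB) \<ge> sv - svB" using b1 sv by simp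
          hence "X < 0" using X2 True xB by simp
          then show ?thesis using X0 by simp
        next
          case False
          hence "g * PvB \<ge> PvB" using g0 Pv by simp
          moreover have "a' * (PvB - Pv) \<ge> 0" using a'1 Pv by simp
          ultimately have "w < 0" using w2 xb by linarith
          then show ?thesis using w0 by simp
        qed
      next
        case False
        have "\<beta> * svB \<le> (a' - 1) * svB" using False sv by (simp add: mult_right_mono)
        moreover have "(a' - 1) * svB \<le> (a' - 1) * sv" using a'1 sv by (simp add: mult_left_mono)
        ultimately have "X < 0" using Xe xb a'_def by (simp add: algebra_simps)
        then show ?thesis using X0 by simp
      qed
    qed
  qed
  have kd: "k * ((U * a + X * d + w * c) - (C * a + x * d + y * c)) \<ge> a * (\<alpha> * Rv + \<beta> * RvB) - (k - 1) * a"
  proof -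
    have "(k * U - k * C) * a \<ge> (p - k + 1) * a" using kU kC p_def a0 by (intro mult_right_mono) auto
    moreover have "a * (\<alpha> * Rv + \<beta> * RvB) = (a + k * d) * p + k * c * q"
    proof -
      have "a * (\<alpha> * Rv + \<beta> * RvB) = \<alpha> * (a * Rv) + \<beta> * (a * RvB)" by (simp add: algebra_simps)
      also have "\<dots> = (a + k * d) * (\<alpha> * sv + \<beta> * svB) - k * c * (\<alpha> * Pv + \<beta> * PvB)"
        unfolding R1 R2 by (simp add: algebra_simps)
      also have "\<dots> = (a + k * d) * p + k * c * q" unfolding pe qe[symmetric] by simp
      finally show ?thesis .
    qed
    ultimately show ?thesis unfolding p_def q_def by (simp add: algebra_simps)
  qed
  have "a * (\<alpha> * Rv + \<beta> * RvB) \<ge> 0" using pos a0 by simp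
  hence "k * ((U * a + X * d + w * c) - (C * a + x * d + y * c)) > k * (- a)" using kd a0 by (simp add: algebra_simps)
  hence gt: "(U * a + X * d + w * c) - (C * a + x * d + y * c) > - a" using k0 mult_less_cancel_left_pos by fastforce
  obtain z where z: "(U * a + X * d + w * c) - (C * a + x * d + y * c) = a * z" using dv by blast
  have "a * z > a * (-1)" using gt z by simp
  hence "z > -1" using a0 mult_less_cancel_left_pos by fastforce
  hence "a * z \<ge> 0" using a0 by simp
  thus ?thesis using z by simp
qed

lemma memS:
  fixes a d c t :: int and k :: nat
  assumes "t \<in> {n. \<exists>u::nat \<Rightarrow> nat. \<exists>w::nat.
           n = (\<Sum>i\<le>k. int (u i) * (a + int i * d)) + int w * c}"
  shows "\<exists>U X w. X \<ge> 0 \<and> w \<ge> 0 \<and> int k * U \<ge> X \<and> t = U * a + X * d + w * c"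
proof -
  obtain u :: "nat \<Rightarrow> nat" and w :: nat where t: "t = (\<Sum>i\<le>k. int (u i) * (a + int i * d)) + int w * c"
    using assms by blast
  define U where "U = (\<Sum>i\<le>k. int (u i))"
  define X where "X = (\<Sum>i\<le>k. int (u i) * int i)"
  have "(\<Sum>i\<le>k. int (u i) * (a + int i * d)) = (\<Sum>i\<le>k. int (u i) * a + int (u i) * int i * d)"
    by (simp add: algebra_simps)
  also have "\<dots> = U * a + X * d" unfolding U_def X_def by (simp add: sum.distrib sum_distrib_right)
  finally have t2: "t = U * a + X * d + int w * c" using t by simp
  have "X \<le> (\<Sum>i\<le>k. int (u i) * int k)" unfolding X_def by (intro sum_mono) (simp add: mult_left_mono)
  also have "\<dots> = int k * U" unfolding U_def by (simp add: sum_distrib_left mult.commute)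
  finally have "X \<le> int k * U" .
  moreover have "X \<ge> 0" unfolding X_def by (intro sum_nonneg) simp
  ultimately show ?thesis using t2 by (intro exI[of _ U] exI[of _ X] exI[of _ "int w"]) simp
qed

lemma win_eq:
  fixes k M Cv :: int
  assumes "k > 0" "k * Cv > k * M" "k * Cv < k * (M + 2)"
  shows "Cv = M + 1"
proof -
  have "Cv > M" using assms mult_less_cancel_left_pos by blast
  moreover have "Cv < M + 2" using assms mult_less_cancel_left_pos by blast
  ultimately show ?thesis by simp
qed

theorem lemma6:
  fixes a d c :: int and k :: nat
    and s q P R :: "int \<Rightarrow> int" and m v x0 y0 :: int
  assumes pos: "a > 0" "d > 0" "c > 0" "k > 0"
    and gcd_gens: "Gcd ({a + int i * d | i. i \<le> k} \<union> {c}) = 1"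
    and gcd_ad: "gcd a d = 1"
    and k2: "k \<ge> 2"
    and s_m1: "s (-1) = a"
    and s_0: "0 \<le> s 0" "s 0 < a" "[d * s 0 = c] (mod a)"
    and m_ge: "m \<ge> -1"
    and s_rec: "\<And>i. 0 \<le> i \<Longrightarrow> i \<le> m \<Longrightarrow>
                  s (i - 1) = q (i + 1) * s i - s (i + 1) \<and> 0 \<le> s (i + 1) \<and> s (i + 1) < s i"
    and s_pos: "\<And>i. -1 \<le> i \<Longrightarrow> i \<le> m \<Longrightarrow> s i > 0"
    and s_end: "s (m + 1) = 0"
    and P_m1: "P (-1) = 0" and P_0: "P 0 = 1"
    and P_rec: "\<And>i. 0 \<le> i \<Longrightarrow> i \<le> m \<Longrightarrow> P (i + 1) = q (i + 1) * P i - P (i - 1)"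
    and R_def: "\<And>i. -1 \<le> i \<Longrightarrow> i \<le> m + 1 \<Longrightarrow>
                  R i = ((a + int k * d) * s i - int k * c * P i) div a"
    and v_def: "-1 \<le> v" "v \<le> m" "R (v + 1) \<le> 0" "0 < R v"
    and pseudo: "pseudo_symmetric (AA_semigroup a d k c)"
    and inL: "(x0, y0) \<in> Lset (s v) (s (v + 1)) (P v) (P (v + 1))"
    and maxpt: "phi a d k c x0 y0 = frobenius (AA_semigroup a d k c) + a"
    and not20: "(x0, y0) \<noteq> (2, 0)"
  shows "(x0 = 0 \<or> [x0 = 1] (mod int k)) \<and>
         (\<forall>x y. 0 \<le> x \<and> x \<le> x0 \<and> 0 \<le> y \<and> y \<le> y0 \<longrightarrow>
            phi a d k c x0 y0 = phi a d k c (x0 - x) (y0 - y) + phi a d k c x y)"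
proof -
  define S where "S = AA_semigroup a d k c"
  define G where "G = frobenius S"
  define Cf where "Cf = (\<lambda>x::int. \<lceil>real_of_int x / real k\<rceil>)"
  have phiC: "\<And>x y. phi a d k c x y = Cf x * a + x * d + y * c" unfolding phi_def Cf_def by simp
  have win: "\<And>x. x \<le> int k * Cf x \<and> int k * Cf x \<le> x + int k - 1"
    unfolding Cf_def using ceil_window pos(4) by blast
  have cs: "a dvd c - d * s 0" using s_0(3) by (metis cong_iff_dvd_diff cong_sym)
  have cop: "coprime a d" using gcd_ad by (simp add: coprime_iff_gcd_eq_1)
  have seq: "i \<le> m \<longrightarrow> (0 \<le> s (i+1) \<and> s (i+1) < s i \<and> 0 \<le> P i \<and> P i < P (i+1)
     \<and> a dvd s i - P i * s 0 \<and> a dvd s (i+1) - P (i+1) * s 0 \<and> s i * P (i+1) - s (i+1) * P i = a)"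
    if "-1 \<le> i" for i
  proof (rule int_ge_induct[of "-1" i "\<lambda>i. i \<le> m \<longrightarrow> (0 \<le> s (i+1) \<and> s (i+1) < s i \<and> 0 \<le> P i \<and> P i < P (i+1)
     \<and> a dvd s i - P i * s 0 \<and> a dvd s (i+1) - P (i+1) * s 0 \<and> s i * P (i+1) - s (i+1) * P i = a)"])
    show "-1 \<le> i" using that .
    show "-1 \<le> m \<longrightarrow> (0 \<le> s (-1+1) \<and> s (-1+1) < s (-1) \<and> 0 \<le> P (-1) \<and> P (-1) < P (-1+1)
     \<and> a dvd s (-1) - P (-1) * s 0 \<and> a dvd s (-1+1) - P (-1+1) * s 0 \<and> s (-1) * P (-1+1) - s (-1+1) * P (-1) = a)"
      using s_m1 s_0 P_m1 P_0 by simp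
  next
    fix i :: int
    assume i1: "-1 \<le> i" and IH: "i \<le> m \<longrightarrow> (0 \<le> s (i+1) \<and> s (i+1) < s i \<and> 0 \<le> P i \<and> P i < P (i+1)
     \<and> a dvd s i - P i * s 0 \<and> a dvd s (i+1) - P (i+1) * s 0 \<and> s i * P (i+1) - s (i+1) * P i = a)"
    show "i + 1 \<le> m \<longrightarrow> (0 \<le> s (i+1+1) \<and> s (i+1+1) < s (i+1) \<and> 0 \<le> P (i+1) \<and> P (i+1) < P (i+1+1)
     \<and> a dvd s (i+1) - P (i+1) * s 0 \<and> a dvd s (i+1+1) - P (i+1+1) * s 0 \<and> s (i+1) * P (i+1+1) - s (i+1+1) * P (i+1) = a)"
    proof
      assume im: "i + 1 \<le> m"
      have H: "0 \<le> s (i+1)" "s (i+1) < s i" "0 \<le> P i" "P i < P (i+1)"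
        "a dvd s i - P i * s 0" "a dvd s (i+1) - P (i+1) * s 0" "s i * P (i+1) - s (i+1) * P i = a"
        using IH im by auto
      have sr: "s i = q (i+1+1) * s (i+1) - s (i+1+1)" "0 \<le> s (i+1+1)" "s (i+1+1) < s (i+1)"
        using s_rec[of "i+1"] i1 im by auto
      have pr: "P (i+1+1) = q (i+1+1) * P (i+1) - P i" using P_rec[of "i+1"] i1 im by auto
      have e1: "s (i+1+1) = q (i+1+1) * s (i+1) - s i" using sr by simp
      have sp: "s (i+1) > 0" using s_pos[of "i+1"] i1 im by auto
      have q2: "q (i+1+1) \<ge> 2"
      proof (rule ccontr)
        assume "\<not> ?thesis"
        hence "q (i+1+1) * s (i+1) \<le> 1 * s (i+1)" using sp by (intro mult_right_mono) auto
        thus False using sr H by linarith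
      qed
      have "q (i+1+1) * P (i+1) \<ge> 2 * P (i+1)" using q2 H by (intro mult_right_mono) auto
      hence "P (i+1) < P (i+1+1)" using pr H by linarith
      moreover have "s (i+1+1) - P (i+1+1) * s 0 = q (i+1+1) * (s (i+1) - P (i+1) * s 0) - (s i - P i * s 0)"
        unfolding e1 pr by (simp add: algebra_simps)
      hence "a dvd s (i+1+1) - P (i+1+1) * s 0" using H by simp
      moreover have "s (i+1) * P (i+1+1) - s (i+1+1) * P (i+1) = s i * P (i+1) - s (i+1) * P i"
        unfolding e1 pr by (simp add: algebra_simps)
      ultimately show "0 \<le> s (i+1+1) \<and> s (i+1+1) < s (i+1) \<and> 0 \<le> P (i+1) \<and> P (i+1) < P (i+1+1)
     \<and> a dvd s (i+1) - P (i+1) * s 0 \<and> a dvd s (i+1+1) - P (i+1+1) * s 0 \<and> s (i+1) * P (i+1+1) - s (i+1+1) * P (i+1) = a"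
        using H sr by simp
    qed
  qed
  have V: "0 \<le> s (v+1)" "s (v+1) < s v" "0 \<le> P v" "P v < P (v+1)"
     "a dvd s v - P v * s 0" "a dvd s (v+1) - P (v+1) * s 0" "s v * P (v+1) - s (v+1) * P v = a"
    using seq[of v] v_def by auto
  have Rex: "a * R i = (a + int k * d) * s i - int k * c * P i"
    if "-1 \<le> i" "i \<le> m + 1" "a dvd s i - P i * s 0" for i
  proof -
    have "(a + int k * d) * s i - int k * c * P i = a * s i + int k * (d * (s i - P i * s 0) - P i * (c - d * s 0))"
      by (simp add: algebra_simps)
    moreover have "a dvd a * s i + int k * (d * (s i - P i * s 0) - P i * (c - d * s 0))"
    proof -
      have "a dvd d * (s i - P i * s 0) - P i * (c - d * s 0)" using that(3) cs by (simp add: dvd_diff)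
      hence "a dvd int k * (d * (s i - P i * s 0) - P i * (c - d * s 0))" by (rule dvd_mult)
      thus ?thesis by (intro dvd_add) auto
    qed
    ultimately have "a dvd (a + int k * d) * s i - int k * c * P i" by simp
    thus ?thesis using R_def[OF that(1,2)] by simp
  qed
  have R1: "a * R v = (a + int k * d) * s v - int k * c * P v" using Rex[of v] v_def V by simp
  have R2: "a * R (v+1) = (a + int k * d) * s (v+1) - int k * c * P (v+1)" using Rex[of "v+1"] v_def V by simp
  have kl: "phi a d k c x y \<le> t" if xyL: "(x, y) \<in> Lset (s v) (s (v + 1)) (P v) (P (v + 1))"
    and tS: "t \<in> S" and dv: "a dvd t - phi a d k c x y" for x y t
  proof -
    obtain U X w where UXw: "X \<ge> 0" "w \<ge> 0" "int k * U \<ge> X" "t = U * a + X * d + w * c"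
      using memS[of t a d k c] tS unfolding S_def AA_semigroup_def by blast
    have "Cf x * a + x * d + y * c \<le> U * a + X * d + w * c"
      apply (rule key[where k="int k" and sz="s 0" and sv="s v" and svB="s (v+1)" and Pv="P v" and PvB="P (v+1)"
            and Rv="R v" and RvB="R (v+1)"])
      using pos V R1 R2 v_def cs cop xyL UXw win[of x] dv
      by (auto simp: Lset_def phiC)
    thus ?thesis using UXw phiC by simp
  qed
  have xyL0: "0 \<le> x0" "x0 \<le> s v - 1" "0 \<le> y0" "y0 \<le> P (v+1) - 1"
    using inL V unfolding Lset_def by auto
  have first: "x0 = 0 \<or> [x0 = 1] (mod int k)"
  proof (rule ccontr)
    assume nf: "\<not> ?thesis"
    hence x0n: "x0 \<noteq> 0" "\<not> int k dvd x0 - 1" by (auto simp: cong_iff_dvd_diff)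
    hence x02: "x0 \<ge> 2" using xyL0 by (cases "x0 = 1") auto
    have w0: "x0 \<le> int k * Cf x0" "int k * Cf x0 \<le> x0 + int k - 1" using win[of x0] by auto
    have w1: "x0 - 1 \<le> int k * Cf (x0 - 1)" "int k * Cf (x0 - 1) \<le> x0 - 1 + int k - 1" using win[of "x0 - 1"] by auto
    have "int k * Cf (x0 - 1) \<noteq> x0 - 1" using x0n(2) by (metis dvd_triv_left)
    hence w1': "x0 \<le> int k * Cf (x0 - 1)" using w1 by simp
    have CC: "Cf (x0 - 1) = Cf x0"
    proof -
      have "int k * Cf (x0 - 1) < int k * (Cf x0 + 1)" using w0 w1 by (simp add: algebra_simps)
      hence a1: "Cf (x0 - 1) < Cf x0 + 1" using pos(4) mult_less_cancel_left_pos by fastforce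
      have "int k * Cf x0 < int k * (Cf (x0 - 1) + 1)" using w0 w1' by (simp add: algebra_simps)
      hence a2: "Cf x0 < Cf (x0 - 1) + 1" using pos(4) mult_less_cancel_left_pos by fastforce
      show ?thesis using a1 a2 by simp
    qed
    have phim: "phi a d k c (x0 - 1) y0 = G + a - d"
      using maxpt CC unfolding phiC G_def S_def by (simp add: algebra_simps)
    have L1: "(x0 - 1, y0) \<in> Lset (s v) (s (v + 1)) (P v) (P (v + 1))"
      using inL x02 unfolding Lset_def by auto
    have L2: "(1, 0) \<in> Lset (s v) (s (v + 1)) (P v) (P (v + 1))"
      using xyL0 x02 V unfolding Lset_def by auto
    have C1: "Cf 1 = 1"
    proof -
      have "1 \<le> int k * Cf 1" "int k * Cf 1 \<le> int k" using win[of 1] by auto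
      hence "int k * 0 < int k * Cf 1" "int k * Cf 1 < int k * 2" using pos(4) by auto
      hence h: "0 < int k * Cf 1" "int k * Cf 1 < int k * 2" by simp_all
      have "0 < Cf 1" using h(1) pos(4) zero_less_mult_pos[of "int k" "Cf 1"] by simp
      moreover have "Cf 1 < 2" using h(2) pos(4) mult_less_cancel_left_pos[of "int k"] by simp
      ultimately have "0 < Cf 1" "Cf 1 < 2" by auto
      thus ?thesis by simp
    qed
    have dS: "d \<notin> S"
    proof
      assume "d \<in> S"
      from kl[OF L2 this] have "phi a d k c 1 0 \<le> d" using C1 by (simp add: phiC)
      thus False using C1 pos by (simp add: phiC)
    qed
    have gdS: "G - d \<notin> S"
    proof
      assume "G - d \<in> S"
      from kl[OF L1 this] have "phi a d k c (x0 - 1) y0 \<le> G - d" using phim by simp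
      thus False using phim pos by simp
    qed
    have ev: "even G" and eqS: "S \<union> {G - s | s. s \<in> S} = UNIV - {G div 2}"
      using pseudo unfolding pseudo_symmetric_def G_def S_def by auto
    have "G - d = G div 2"
    proof (rule ccontr)
      assume "G - d \<noteq> G div 2"
      hence "G - d \<in> S \<union> {G - s | s. s \<in> S}" using eqS by auto
      thus False using gdS dS by auto
    qed
    hence G2: "G = 2 * d" using ev by (auto elim!: evenE)
    have eq: "Cf x0 * a + x0 * d + y0 * c = a + 2 * d" using maxpt G2 unfolding phiC G_def S_def by simp
    have "int k * 0 < int k * Cf x0" using w0 x02 by simp
    hence "Cf x0 > 0" using pos(4) mult_less_cancel_left_pos[of "int k" 0 "Cf x0"] by simp
    hence "Cf x0 \<ge> 1" by simp
    hence ca: "Cf x0 * a \<ge> a" using pos by simp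
    have yc: "y0 * c \<ge> 0" using xyL0 pos by simp
    have x2: "x0 = 2"
    proof (rule ccontr)
      assume "x0 \<noteq> 2"
      hence "x0 * d \<ge> 3 * d" using x02 pos by (intro mult_right_mono) auto
      thus False using eq ca yc pos by linarith
    qed
    hence "x0 * d = 2 * d" by simp
    hence "y0 * c = 0" using eq ca yc by linarith
    hence "y0 = 0" using pos by simp
    thus False using x2 not20 by simp
  qed
  have second: "phi a d k c x0 y0 = phi a d k c (x0 - x) (y0 - y) + phi a d k c x y"
    if "0 \<le> x" "x \<le> x0" "0 \<le> y" "y \<le> y0" for x y
  proof -
    have "Cf x0 = Cf (x0 - x) + Cf x"
    proof (cases "x0 = 0")
      case True
      hence "x = 0" using that by simp
      thus ?thesis using True unfolding Cf_def by simp
    next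
      case False
      hence "int k dvd x0 - 1" using first by (simp add: cong_iff_dvd_diff)
      then obtain M where M: "x0 - 1 = int k * M" by blast
      have kp: "int k > 0" using pos by simp
      have dist: "int k * (M + 2) = int k * M + 2 * int k" by (simp add: algebra_simps)
      have wa: "x0 \<le> int k * Cf x0" "int k * Cf x0 \<le> x0 + int k - 1" using win[of x0] by auto
      have wb: "x \<le> int k * Cf x" "int k * Cf x \<le> x + int k - 1" using win[of x] by auto
      have wc: "x0 - x \<le> int k * Cf (x0 - x)" "int k * Cf (x0 - x) \<le> x0 - x + int k - 1" using win[of "x0 - x"] by auto
      have "Cf x0 = M + 1"
        by (rule win_eq[OF kp]) (use wa M dist kp in linarith)+
      moreover have "Cf (x0 - x) + Cf x = M + 1"
      proof (rule win_eq[OF kp])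
        have d2: "int k * (Cf (x0 - x) + Cf x) = int k * Cf (x0 - x) + int k * Cf x" by (simp add: distrib_left)
        show "int k * M < int k * (Cf (x0 - x) + Cf x)" using wb wc M d2 by linarith
        show "int k * (Cf (x0 - x) + Cf x) < int k * (M + 2)" using wb wc M d2 dist by linarith
      qed
      ultimately show ?thesis by simp
    qed
    thus ?thesis unfolding phiC by (simp add: algebra_simps)
  qed
  show ?thesis using first second by blast
qed

end
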